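(* Fix a prime $p>3$ and an integer $n\ge 2$, and write the base-$p$ expansion $n=\sum_{i=1}^k a_ip^{b_i}$ with $0<a_i\le p-1$ and $0\le b_1<\cdots<b_k$. Then $\prod_{i=1}^k a_i!\,p^{b_i}\le ((p-1)!)^{(n-1)/(p-2)}$. Furthermore, if $a_i=1$ for all $i$, then $\prod_{i=1}^k a_i!\,p^{b_i}\le \tfrac12((p-1)!)^{(n-1)/(p-2)}$. *)

theory Defs
  imports Complex_Main "HOL-Computational_Algebra.Primes"
begin

end

theory Submission
  imports Defs
begin

lemma fact_pow_mono_aux:
  fixes a m :: nat
  assumes "1 \<le> a" "a \<le> m"
  shows "fact a ^ (m - 1) \<le> (fact m ^ (a - 1) :: nat)"
  using assms(2)
proof (induction m rule: dec_induct)
  case base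
  show ?case by (simp add: power_mult[symmetric] mult.commute)
next
  case (step m)
  have fa: "fact a \<le> a ^ (a - 1)"
  proof -
    have "fact a = (\<Prod>j=1..a. j)" by (simp add: fact_prod)
    also have "\<dots> = (\<Prod>j\<in>{2..a}. j)"
      using prod.atLeast_Suc_atMost[of 1 a "\<lambda>j. j"] assms(1) by (simp add: numeral_2_eq_2)
    also have "\<dots> \<le> (\<Prod>j\<in>{2..a}. a)" by (rule prod_mono) auto
    also have "\<dots> = a ^ (a - 1)" using assms(1) by simp
    finally show ?thesis .
  qed
  have "fact a ^ (Suc m - 1) = fact a ^ (m - 1) * fact a"
  proof -
    have "Suc m - 1 = Suc (m - 1)" using step.hyps assms(1) by simp
    thus ?thesis by (simp only: power_Suc2)
  qed
  also have "\<dots> \<le> fact m ^ (a - 1) * (Suc m) ^ (a - 1)"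
  proof (rule mult_mono)
    show "fact a \<le> Suc m ^ (a - 1)"
      using fa power_mono[of a "Suc m" "a-1"] step.hyps by linarith
  qed (use step.IH in auto)
  also have "\<dots> = fact (Suc m) ^ (a - 1)"
    by (metis fact_Suc of_nat_id power_mult_distrib mult.commute)
  finally show ?case .
qed

lemma two_pow_fact: "2 ^ m \<le> (fact (Suc m) :: nat)"
proof (induction m)
  case (Suc m)
  have "2 ^ Suc m = 2 * 2 ^ m" by simp
  also have "\<dots> \<le> Suc (Suc m) * fact (Suc m)"
    using Suc by (intro mult_mono) auto
  finally show ?case by simp
qed simp

lemma pow_lin: "(p::nat) \<ge> 2 \<Longrightarrow> b * (p - 1) + 1 \<le> p ^ b"
proof (induction b)
  case (Suc b)
  have "Suc b * (p - 1) + 1 = (b * (p - 1) + 1) + (p - 1)" by simp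
  also have "\<dots> \<le> p ^ b + (p - 1) * p ^ b"
    using Suc by (intro add_mono) auto
  also have "\<dots> = p ^ Suc b" using Suc.prems by (cases p) auto
  finally show ?case .
qed simp

theorem lemma6p1:
  fixes p n k :: nat and a b :: "nat \<Rightarrow> nat"
  assumes "prime p" and "p > 3" and "n \<ge> 2"
    and "n = (\<Sum>i=1..k. a i * p ^ b i)"
    and "\<forall>i\<in>{1..k}. 0 < a i \<and> a i \<le> p - 1"
    and "\<forall>i\<in>{1..k}. \<forall>j\<in>{1..k}. i < j \<longrightarrow> b i < b j"
  shows "real (\<Prod>i=1..k. fact (a i) * p ^ b i)
           \<le> (fact (p - 1) :: real) powr ((real n - 1) / (real p - 2))
         \<and> ((\<forall>i\<in>{1..k}. a i = 1) \<longrightarrow>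
            real (\<Prod>i=1..k. fact (a i) * p ^ b i)
              \<le> (1/2) * (fact (p - 1) :: real) powr ((real n - 1) / (real p - 2)))"
proof -
  define F :: real where "F = fact (p - 1)"
  define q where "q = F powr (1 / (real p - 2))"
  have Fpos: "F > 0" unfolding F_def by simp
  have qpow: "q ^ m = F powr (real m / (real p - 2))" for m
  proof -
    have "q ^ m = q powr real m" unfolding q_def using Fpos by (simp add: powr_realpow)
    also have "\<dots> = F powr (real m / (real p - 2))" unfolding q_def by (simp add: powr_powr)
    finally show ?thesis .
  qed
  have qF: "q ^ (p - 2) = F"
    using qpow[of "p-2"] assms(2) Fpos by (simp add: of_nat_diff)
  have qpos: "q > 0" unfolding q_def using Fpos by simp
  have q2: "q \<ge> 2"
  proof -
    have "(2::nat) ^ (p - 2) \<le> fact (Suc (p - 2))" by (rule two_pow_fact)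
    also have "Suc (p - 2) = p - 1" using assms(2) by simp
    finally have "real ((2::nat) ^ (p - 2)) \<le> real (fact (p - 1))" by (simp only: of_nat_le_iff)
    hence "(2::real) ^ (p - 2) \<le> q ^ (p - 2)" unfolding qF F_def by simp
    moreover have "p - 2 > 0" using assms(2) by simp
    ultimately show ?thesis using power_mono_iff[of "2::real" q "p-2"] qpos by simp
  qed
  have q1: "q \<ge> 1" using q2 by simp
  have Fp: "F \<ge> real p"
  proof -
    have "fact (p - 2) \<ge> (2::nat)"
    proof -
      obtain m where m: "p = m + 4" using assms(2) by (intro that[of "p - 4"]) simp
      have "(2::nat) \<le> 2 ^ Suc m" by simp
      also have "\<dots> \<le> fact (Suc (Suc m))" by (rule two_pow_fact)
      finally show ?thesis using m by (simp add: numeral_eq_Suc)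
    qed
    hence "(p - 1) * 2 \<le> (p - 1) * fact (p - 2)" by simp
    also have "(p - 1) * fact (p - 2) = (fact (p - 1) :: nat)"
    proof -
      obtain m where "p = Suc (Suc m)" using assms(2) by (intro that[of "p - 2"]) simp
      thus ?thesis by simp
    qed
    finally have "p \<le> (fact (p - 1) :: nat)" using assms(2) by linarith
    hence "real p \<le> real (fact (p - 1) :: nat)" by (simp only: of_nat_le_iff)
    thus ?thesis unfolding F_def by simp
  qed
  have factq: "real (fact a') \<le> q ^ (a' - 1)" if "1 \<le> a'" "a' \<le> p - 1" for a'
  proof -
    have "fact a' ^ (p - 1 - 1) \<le> (fact (p - 1) ^ (a' - 1) :: nat)"
      by (rule fact_pow_mono_aux) (use that in auto)
    hence "real (fact a' ^ (p - 2)) \<le> real (fact (p - 1) ^ (a' - 1) :: nat)" by (simp only: of_nat_le_iff diff_diff_left one_add_one)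
    hence "(real (fact a')) ^ (p - 2) \<le> F ^ (a' - 1)"
      unfolding F_def by simp
    also have "\<dots> = (q ^ (a' - 1)) ^ (p - 2)" by (simp add: qF[symmetric] power_mult[symmetric] mult.commute)
    moreover have "p - 2 > 0" using assms(2) by simp
    ultimately show ?thesis using power_mono_iff[of "real (fact a')" "q ^ (a' - 1)" "p-2"] qpos by simp
  qed
  have pq: "real p ^ b' \<le> q ^ (b' * (p - 2))" for b'
  proof -
    have "real p ^ b' \<le> F ^ b'" using Fp by (intro power_mono) auto
    thus ?thesis by (simp add: qF[symmetric] power_mult[symmetric] mult.commute)
  qed
  have term1: "real (fact a' * p ^ b') \<le> q ^ (a' * p ^ b' - 1)"
    if "1 \<le> a'" "a' \<le> p - 1" for a' b'
  proof -
    have e: "(a' - 1) + b' * (p - 2) \<le> a' * p ^ b' - 1"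
    proof -
      have "b' * (p - 1) + 1 \<le> p ^ b'" using pow_lin[of p b'] assms(2) by simp
      moreover have "b' * (p - 2) \<le> b' * (p - 1)" by (intro mult_le_mono2) simp
      moreover have "p ^ b' \<le> a' * p ^ b'" using that by simp
      moreover have "a' * p ^ b' = (a' - 1) * p ^ b' + p ^ b'" using that
        by (cases a') auto
      moreover have "a' - 1 \<le> (a' - 1) * p ^ b'" using assms(2) by simp
      ultimately show ?thesis by linarith
    qed
    have "real (fact a' * p ^ b') = real (fact a') * real p ^ b'" by simp
    also have "\<dots> \<le> q ^ (a' - 1) * q ^ (b' * (p - 2))"
      using factq[OF that] pq[of b'] qpos by (intro mult_mono) auto
    also have "\<dots> = q ^ ((a' - 1) + b' * (p - 2))" by (simp add: power_add)
    also have "\<dots> \<le> q ^ (a' * p ^ b' - 1)" using e q1 by (intro power_increasing) auto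
    finally show ?thesis .
  qed
  have term2: "2 * real (p ^ b') \<le> q ^ (p ^ b' - 1)" if "b' \<ge> 1" for b'
  proof -
    have e: "1 + b' * (p - 2) \<le> p ^ b' - 1"
    proof -
      have "b' * (p - 1) + 1 \<le> p ^ b'" using pow_lin[of p b'] assms(2) by simp
      moreover have "b' * (p - 1) = b' * (p - 2) + b'"
      proof -
        have "p - 1 = (p - 2) + 1" using assms(2) by simp
        thus ?thesis by (simp add: algebra_simps)
      qed
      ultimately show ?thesis using that by linarith
    qed
    have "2 * real (p ^ b') \<le> q * q ^ (b' * (p - 2))"
      using q2 pq[of b'] by (intro mult_mono) auto
    also have "\<dots> = q ^ (1 + b' * (p - 2))" by simp
    also have "\<dots> \<le> q ^ (p ^ b' - 1)" using e q1 by (intro power_increasing) auto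
    finally show ?thesis .
  qed
  have kpos: "k \<ge> 1" using assms(3,4) by (cases k) auto
  have RHS: "F powr ((real n - 1) / (real p - 2)) = q ^ (n - 1)"
    using qpow[of "n-1"] assms(3) by (simp add: of_nat_diff)
  have sumeq: "(\<Sum>i=1..k. a i * p ^ b i - 1) + k = n"
  proof -
    have "(\<Sum>i=1..k. a i * p ^ b i - 1) + k = (\<Sum>i=1..k. (a i * p ^ b i - 1) + 1)"
      unfolding sum.distrib by simp
    also have "\<dots> = (\<Sum>i=1..k. a i * p ^ b i)"
      using assms(5) assms(2) by (intro sum.cong) auto
    finally show ?thesis using assms(4) by simp
  qed
  have main: "real (\<Prod>i=1..k. fact (a i) * p ^ b i) \<le> q ^ (n - k)"
  proof -
    have "real (\<Prod>i=1..k. fact (a i) * p ^ b i) = (\<Prod>i=1..k. real (fact (a i) * p ^ b i))"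
      by (rule of_nat_prod)
    also have "\<dots> \<le> (\<Prod>i=1..k. q ^ (a i * p ^ b i - 1))"
    proof (rule prod_mono)
      fix i assume "i \<in> {1..k}"
      hence h: "0 < a i \<and> a i \<le> p - 1" using assms(5) by blast
      have t: "real (fact (a i) * p ^ b i) \<le> q ^ (a i * p ^ b i - 1)"
        by (rule term1) (use h in linarith)+
      show "0 \<le> real (fact (a i) * p ^ b i) \<and> real (fact (a i) * p ^ b i) \<le> q ^ (a i * p ^ b i - 1)"
        using t by (intro conjI of_nat_0_le_iff)
    qed
    also have "\<dots> = q ^ (\<Sum>i=1..k. a i * p ^ b i - 1)" by (simp add: power_sum)
    also have "(\<Sum>i=1..k. a i * p ^ b i - 1) = n - k" using sumeq by linarith
    finally show ?thesis .
  qed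
  have P1: "real (\<Prod>i=1..k. fact (a i) * p ^ b i) \<le> q ^ (n - 1)"
    using main q1 kpos by (meson order.trans power_increasing diff_le_mono2)
  have P2: "real (\<Prod>i=1..k. fact (a i) * p ^ b i) \<le> (1/2) * q ^ (n - 1)"
    if all1: "\<forall>i\<in>{1..k}. a i = 1"
  proof (cases "k = 1")
    case True
    have n1: "n = p ^ b 1" using assms(4) all1 True by simp
    have "b 1 \<ge> 1" using n1 assms(3) by (cases "b 1") auto
    hence "2 * real (p ^ b 1) \<le> q ^ (p ^ b 1 - 1)" by (rule term2)
    thus ?thesis using True n1 all1 by simp
  next
    case False
    hence "n - k \<le> n - 2" using kpos by simp
    hence "q ^ (n - k) \<le> q ^ (n - 2)" using q1 by (rule power_increasing)
    moreover have "2 * q ^ (n - 2) \<le> q * q ^ (n - 2)" using q2 qpos by (intro mult_right_mono) auto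
    moreover have "q * q ^ (n - 2) = q ^ (n - 1)"
    proof -
      have "n - 1 = Suc (n - 2)" using assms(3) by simp
      thus ?thesis by simp
    qed
    ultimately show ?thesis using main by linarith
  qed
  show ?thesis unfolding F_def[symmetric] RHS using P1 P2 by blast
qed

end
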